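(* Let $A, C, D$ be binary random variables, with $A$ taking values $a,\overline{a}$, $C$ taking values $c,\overline{c}$, $D$ taking values $d,\overline{d}$, and let $Y$ be a real random variable with finite expectation. Suppose the joint distribution factorizes as \[ p(A,C,D,Y)=p(C)\,p(D\mid C)\,p(A\mid C)\,p(Y\mid A,C), \] and that every event $\{A=x, C=y, D=z\}$ has positive probability. Let $p(c)=0.5$ and $p(a\mid c)=p(\overline{a}\mid\overline{c})=p(d\mid c)=p(\overline{d}\mid\overline{c})\ge 0.5$. If \[ E[Y|a,c]-E[Y|a,\overline{c}]\ \ge\ E[Y|\overline{a},\overline{c}]-E[Y|\overline{a},c]\ \ge\ 0, \] then $RD_{crude}\ge RD_{obs}\ge RD_{true}$.
   Context: $RD_{true}=E[Y|a,c]p(c)+E[Y|a,\overline{c}]p(\overline{c})-E[Y|\overline{a},c]p(c)-E[Y|\overline{a},\overline{c}]p(\overline{c})$; $RD_{crude}=E[Y|a]-E[Y|\overline{a}]$; $RD_{obs}=E[Y|a,d]p(d)+E[Y|a,\overline{d}]p(\overline{d})-E[Y|\overline{a},d]p(d)-E[Y|\overline{a},\overline{d}]p(\overline{d})$. *)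

theory Defs
  imports "HOL-Probability.Probability"
begin

text \<open>Binary random variables are modelled as functions into bool; the value True
  stands for a (resp. c, d) and False for the barred value.\<close>

definition ev :: "'w measure \<Rightarrow> ('w \<Rightarrow> 'b) \<Rightarrow> 'b \<Rightarrow> 'w set" where
  "ev M X x = {w \<in> space M. X w = x}"

definition cprob :: "'w measure \<Rightarrow> 'w set \<Rightarrow> 'w set \<Rightarrow> real" where
  "cprob M E F = measure M (E \<inter> F) / measure M F"

definition cexp :: "'w measure \<Rightarrow> ('w \<Rightarrow> real) \<Rightarrow> 'w set \<Rightarrow> real" where
  "cexp M Y F = (\<integral>w. indicator F w * Y w \<partial>M) / measure M F"

definition RD_true :: "'w measure \<Rightarrow> ('w \<Rightarrow> bool) \<Rightarrow> ('w \<Rightarrow> bool) \<Rightarrow> ('w \<Rightarrow> real) \<Rightarrow> real" where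
  "RD_true M A C Y =
     cexp M Y (ev M A True \<inter> ev M C True) * measure M (ev M C True)
   + cexp M Y (ev M A True \<inter> ev M C False) * measure M (ev M C False)
   - cexp M Y (ev M A False \<inter> ev M C True) * measure M (ev M C True)
   - cexp M Y (ev M A False \<inter> ev M C False) * measure M (ev M C False)"

definition RD_crude :: "'w measure \<Rightarrow> ('w \<Rightarrow> bool) \<Rightarrow> ('w \<Rightarrow> real) \<Rightarrow> real" where
  "RD_crude M A Y = cexp M Y (ev M A True) - cexp M Y (ev M A False)"

definition RD_obs :: "'w measure \<Rightarrow> ('w \<Rightarrow> bool) \<Rightarrow> ('w \<Rightarrow> bool) \<Rightarrow> ('w \<Rightarrow> real) \<Rightarrow> real" where
  "RD_obs M A D Y =
     cexp M Y (ev M A True \<inter> ev M D True) * measure M (ev M D True)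
   + cexp M Y (ev M A True \<inter> ev M D False) * measure M (ev M D False)
   - cexp M Y (ev M A False \<inter> ev M D True) * measure M (ev M D True)
   - cexp M Y (ev M A False \<inter> ev M D False) * measure M (ev M D False)"

end

theory Submission
  imports Defs
begin

lemma key_integral:
  fixes M :: "'w measure" and Y :: "'w \<Rightarrow> real"
  assumes pm: "prob_space M" and S: "S \<in> sets M" and T: "T \<in> sets M"
    and Y[measurable]: "Y \<in> borel_measurable M" and r: "r \<ge> 0"
    and H: "\<And>B. B \<in> sets borel \<Longrightarrow>
       measure M (S \<inter> {w \<in> space M. Y w \<in> B}) = r * measure M ({w \<in> space M. Y w \<in> B} \<inter> T)"
  shows "(\<integral>w. indicator S w * Y w \<partial>M) = r * (\<integral>w. indicator T w * Y w \<partial>M)"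
proof -
  interpret prob_space M by fact
  define NS where "NS = distr (density M (indicator S)) borel Y"
  define NT where "NT = distr (density M (indicator T)) borel Y"
  have intS: "(\<integral>w. indicator S w * Y w \<partial>M) = (\<integral>y. y \<partial>NS)"
  proof -
    have d: "density M (indicator S) = density M (\<lambda>x. ennreal (indicator S x :: real))"
      by (simp add: ennreal_indicator)
    show ?thesis unfolding NS_def d using S
      by (subst integral_distr) (auto simp: integral_density)
  qed
  have intT: "(\<integral>w. indicator T w * Y w \<partial>M) = (\<integral>y. y \<partial>NT)"
  proof -
    have d: "density M (indicator T) = density M (\<lambda>x. ennreal (indicator T x :: real))"
      by (simp add: ennreal_indicator)
    show ?thesis unfolding NT_def d using T
      by (subst integral_distr) (auto simp: integral_density)
  qed
  have eq: "NS = density NT (\<lambda>_. ennreal r)"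
  proof (rule measure_eqI)
    show "sets NS = sets (density NT (\<lambda>_. ennreal r))" by (simp add: NS_def NT_def)
  next
    fix B assume "B \<in> sets NS"
    then have B: "B \<in> sets borel" by (simp add: NS_def)
    have m: "{w \<in> space M. Y w \<in> B} \<in> sets M" using B by measurable
    have "emeasure NS B = emeasure M (S \<inter> {w \<in> space M. Y w \<in> B})"
      unfolding NS_def using B S m
      by (simp add: emeasure_distr emeasure_restricted vimage_def Int_def conj_commute)
    also have "\<dots> = ennreal (r * measure M ({w \<in> space M. Y w \<in> B} \<inter> T))"
      using H[OF B] S m by (simp add: emeasure_eq_measure)
    also have "\<dots> = ennreal r * emeasure NT B"
      unfolding NT_def using B T m
      by (simp add: emeasure_distr emeasure_restricted emeasure_eq_measure ennreal_mult r
          vimage_def Int_def conj_commute)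
    also have "\<dots> = emeasure (density NT (\<lambda>_. ennreal r)) B"
      using B by (simp add: emeasure_density_const NT_def)
    finally show "emeasure NS B = emeasure (density NT (\<lambda>_. ennreal r)) B" .
  qed
  have "(\<integral>y. y \<partial>NS) = (\<integral>y. r * y \<partial>NT)"
    unfolding eq using r by (subst integral_density) (auto simp: NT_def)
  also have "\<dots> = r * (\<integral>y. y \<partial>NT)" by simp
  finally show ?thesis using intS intT by simp
qed


lemma alg:
  fixes q m11 m10 m01 m00 :: real
  assumes q: "q \<ge> 1/2" "q < 1"
    and h1: "m11 - m10 \<ge> m00 - m01" and h2: "m00 - m01 \<ge> 0"
  shows "(q*m11 + (1-q)*m10) - ((1-q)*m01 + q*m00) \<ge>
     (q*q*m11 + (1-q)*(1-q)*m10)/(q*q+(1-q)*(1-q)) * (1/2) + (m11+m10)/2 * (1/2)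
   - (m01+m00)/2 * (1/2) - ((1-q)*(1-q)*m01 + q*q*m00)/(q*q+(1-q)*(1-q)) * (1/2)
   \<and> (q*q*m11 + (1-q)*(1-q)*m10)/(q*q+(1-q)*(1-q)) * (1/2) + (m11+m10)/2 * (1/2)
   - (m01+m00)/2 * (1/2) - ((1-q)*(1-q)*m01 + q*q*m00)/(q*q+(1-q)*(1-q)) * (1/2)
   \<ge> m11 * (1/2) + m10 * (1/2) - m01 * (1/2) - m00*(1/2)"
proof -
  define s where "s = q*q+(1-q)*(1-q)"
  define t where "t = 1/s"
  define \<Delta> where "\<Delta> = (m11 - m10) - (m00 - m01)"
  have qq: "q*q > 0" using q by simp
  have "(1-q)*(1-q) \<ge> 0" by simp
  hence s: "s > 0" unfolding s_def using qq by linarith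
  have ts: "t * s = 1" using s unfolding t_def by simp
  have t: "t > 0" using s unfolding t_def by simp
  have D: "\<Delta> \<ge> 0" using h1 unfolding \<Delta>_def by simp
  have r1: "(q*q*m11 + (1-q)*(1-q)*m10)/s = t * (q*q*m11 + (1-q)*(1-q)*m10)" unfolding t_def by simp
  have r2: "((1-q)*(1-q)*m01 + q*q*m00)/s = t * ((1-q)*(1-q)*m01 + q*q*m00)" unfolding t_def by simp
  have e1: "(q*m11 + (1-q)*m10) - ((1-q)*m01 + q*m00) - (t*(q*q*m11 + (1-q)*(1-q)*m10) * (1/2) + (m11+m10)/2 * (1/2)
   - (m01+m00)/2 * (1/2) - t*((1-q)*(1-q)*m01 + q*q*m00) * (1/2)) = (2*q-1)^3*t/4 * \<Delta>"
    using ts unfolding \<Delta>_def s_def by algebra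
  have e2: "t*(q*q*m11 + (1-q)*(1-q)*m10) * (1/2) + (m11+m10)/2 * (1/2)
   - (m01+m00)/2 * (1/2) - t*((1-q)*(1-q)*m01 + q*q*m00) * (1/2) - (m11 * (1/2) + m10 * (1/2) - m01 * (1/2) - m00*(1/2))
   = (2*q-1)*t/4 * \<Delta>"
    using ts unfolding \<Delta>_def s_def by algebra
  have "(2*q-1)^3*t/4 * \<Delta> \<ge> 0" using q t D by simp
  moreover have "(2*q-1)*t/4 * \<Delta> \<ge> 0" using q t D by simp
  ultimately show ?thesis using e1 e2 unfolding s_def[symmetric] r1 r2 by linarith
qed


lemma ev_sets:
  assumes "X \<in> measurable M (count_space UNIV)"
  shows "ev M X b \<in> sets M"
proof -
  have "ev M X b = X -` {b} \<inter> space M" unfolding ev_def by auto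
  then show ?thesis using measurable_sets[OF assms, of "{b}"] by simp
qed

lemma split_measure:
  assumes pm: "prob_space M" and X: "X \<in> measurable M (count_space UNIV)" and S: "S \<in> sets M"
  shows "measure M S = measure M (S \<inter> ev M X True) + measure M (S \<inter> ev M X False)"
proof -
  interpret prob_space M by fact
  have "S = (S \<inter> ev M X True) \<union> (S \<inter> ev M X False)"
    using sets.sets_into_space[OF S] unfolding ev_def by auto
  moreover have "(S \<inter> ev M X True) \<inter> (S \<inter> ev M X False) = {}" unfolding ev_def by auto
  ultimately show ?thesis
    using finite_measure_Union[of "S \<inter> ev M X True" "S \<inter> ev M X False"] S ev_sets[OF X]
    by (metis sets.Int)
qed

lemma split_integral:
  fixes Y :: "'w \<Rightarrow> real"
  assumes pm: "prob_space M" and X: "X \<in> measurable M (count_space UNIV)" and S: "S \<in> sets M"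
    and Y: "integrable M Y"
  shows "(\<integral>w. indicator S w * Y w \<partial>M) = (\<integral>w. indicator (S \<inter> ev M X True) w * Y w \<partial>M)
     + (\<integral>w. indicator (S \<inter> ev M X False) w * Y w \<partial>M)"
proof -
  have s1: "S \<inter> ev M X True \<in> sets M" and s2: "S \<inter> ev M X False \<in> sets M"
    using S ev_sets[OF X] by auto
  have i1: "integrable M (\<lambda>w. indicator (S \<inter> ev M X True) w * Y w)"
    using integrable_real_mult_indicator[OF s1 Y] by (simp add: mult.commute)
  have i2: "integrable M (\<lambda>w. indicator (S \<inter> ev M X False) w * Y w)"
    using integrable_real_mult_indicator[OF s2 Y] by (simp add: mult.commute)
  have "(\<integral>w. indicator S w * Y w \<partial>M) = (\<integral>w. indicator (S \<inter> ev M X True) w * Y w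
      + indicator (S \<inter> ev M X False) w * Y w \<partial>M)"
    by (rule Bochner_Integration.integral_cong) (auto simp: ev_def indicator_def)
  also have "\<dots> = (\<integral>w. indicator (S \<inter> ev M X True) w * Y w \<partial>M)
     + (\<integral>w. indicator (S \<inter> ev M X False) w * Y w \<partial>M)"
    by (rule Bochner_Integration.integral_add[OF i1 i2])
  finally show ?thesis .
qed

theorem theorem2:
  fixes M :: "'w measure"
    and A C D :: "'w \<Rightarrow> bool"
    and Y :: "'w \<Rightarrow> real"
  assumes "prob_space M"
    and "A \<in> measurable M (count_space UNIV)"
    and "C \<in> measurable M (count_space UNIV)"
    and "D \<in> measurable M (count_space UNIV)"
    and "Y \<in> borel_measurable M"
    and "integrable M Y"
    and factor: "\<And>x y z B. B \<in> sets borel \<Longrightarrow>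
          measure M (ev M A x \<inter> ev M C y \<inter> ev M D z \<inter> {w \<in> space M. Y w \<in> B})
        = measure M (ev M C y) * cprob M (ev M D z) (ev M C y) * cprob M (ev M A x) (ev M C y)
          * cprob M {w \<in> space M. Y w \<in> B} (ev M A x \<inter> ev M C y)"
    and pos: "\<And>x y z. measure M (ev M A x \<inter> ev M C y \<inter> ev M D z) > 0"
    and pc: "measure M (ev M C True) = 1/2"
    and eq1: "cprob M (ev M A True) (ev M C True) = cprob M (ev M A False) (ev M C False)"
    and eq2: "cprob M (ev M A False) (ev M C False) = cprob M (ev M D True) (ev M C True)"
    and eq3: "cprob M (ev M D True) (ev M C True) = cprob M (ev M D False) (ev M C False)"
    and ge: "cprob M (ev M A True) (ev M C True) \<ge> 1/2"
    and h1: "cexp M Y (ev M A True \<inter> ev M C True) - cexp M Y (ev M A True \<inter> ev M C False)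
           \<ge> cexp M Y (ev M A False \<inter> ev M C False) - cexp M Y (ev M A False \<inter> ev M C True)"
    and h2: "cexp M Y (ev M A False \<inter> ev M C False) - cexp M Y (ev M A False \<inter> ev M C True) \<ge> 0"
  shows "RD_crude M A Y \<ge> RD_obs M A D Y \<and> RD_obs M A D Y \<ge> RD_true M A C Y"

proof -
  interpret prob_space M by fact
  note pm = \<open>prob_space M\<close>
  note mA = assms(2) and mC = assms(3) and mD = assms(4) and Yint = assms(6)
  note sA = ev_sets[OF mA] and sC = ev_sets[OF mC] and sD = ev_sets[OF mD]
  define P where "P x y z = measure M (ev M A x \<inter> ev M C y \<inter> ev M D z)" for x y z
  define J where "J x y z = (\<integral>w. indicator (ev M A x \<inter> ev M C y \<inter> ev M D z) w * Y w \<partial>M)" for x y z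
  define mu where "mu x y = cexp M Y (ev M A x \<inter> ev M C y)" for x y
  have Ppos: "P x y z > 0" for x y z unfolding P_def using pos by simp
  have mAC: "measure M (ev M A x \<inter> ev M C y) = P x y True + P x y False" for x y
    unfolding P_def by (rule split_measure[OF pm mD]) (use sA sC in auto)
  have JAC: "(\<integral>w. indicator (ev M A x \<inter> ev M C y) w * Y w \<partial>M) = J x y True + J x y False" for x y
    unfolding J_def by (rule split_integral[OF pm mD _ Yint]) (use sA sC in auto)
  have swap: "ev M A x \<inter> ev M D z \<inter> ev M C y = ev M A x \<inter> ev M C y \<inter> ev M D z" for x y z by blast
  have mAD: "measure M (ev M A x \<inter> ev M D z) = P x True z + P x False z" for x z
    unfolding P_def swap[symmetric] by (rule split_measure[OF pm mC]) (use sA sD in auto)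
  have JAD: "(\<integral>w. indicator (ev M A x \<inter> ev M D z) w * Y w \<partial>M) = J x True z + J x False z" for x z
    unfolding J_def swap[symmetric] by (rule split_integral[OF pm mC _ Yint]) (use sA sD in auto)
  have mA1: "measure M (ev M A x) = P x True True + P x True False + P x False True + P x False False" for x
    using split_measure[OF pm mC sA, of x] mAC by simp
  have JA: "(\<integral>w. indicator (ev M A x) w * Y w \<partial>M) = J x True True + J x True False + J x False True + J x False False" for x
    using split_integral[OF pm mC sA Yint, of x] JAC by simp
  have spC: "space M \<inter> ev M C y = ev M C y" for y unfolding ev_def by auto
  have spD: "space M \<inter> ev M D y = ev M D y" for y unfolding ev_def by auto
  have mC1: "measure M (ev M C True) + measure M (ev M C False) = 1"
    using split_measure[OF pm mC sets.top] spC by (simp add: prob_space)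
  have mD1: "measure M (ev M D True) + measure M (ev M D False) = 1"
    using split_measure[OF pm mD sets.top] spD by (simp add: prob_space)
  have pcF: "measure M (ev M C False) = 1/2" using mC1 pc by simp
  have pcy: "measure M (ev M C y) = 1/2" for y using pc pcF by (cases y) auto
  have cAsum: "cprob M (ev M A True) (ev M C y) + cprob M (ev M A False) (ev M C y) = 1" for y
  proof -
    have "measure M (ev M C y) = measure M (ev M C y \<inter> ev M A True) + measure M (ev M C y \<inter> ev M A False)"
      by (rule split_measure[OF pm mA sC])
    then show ?thesis unfolding cprob_def using pcy[of y]
      by (simp add: Int_commute add_divide_distrib[symmetric])
  qed
  have cDsum: "cprob M (ev M D True) (ev M C y) + cprob M (ev M D False) (ev M C y) = 1" for y
  proof -
    have "measure M (ev M C y) = measure M (ev M C y \<inter> ev M D True) + measure M (ev M C y \<inter> ev M D False)"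
      by (rule split_measure[OF pm mD sC])
    then show ?thesis unfolding cprob_def using pcy[of y]
      by (simp add: Int_commute add_divide_distrib[symmetric])
  qed
  define q where "q = cprob M (ev M A True) (ev M C True)"
  have cA: "cprob M (ev M A x) (ev M C y) = (if x = y then q else 1 - q)" for x y
    using cAsum[of True] cAsum[of False] eq1 unfolding q_def
    by (cases x; cases y) auto
  have cD: "cprob M (ev M D z) (ev M C y) = (if z = y then q else 1 - q)" for z y
    using cDsum[of True] cDsum[of False] eq1 eq2 eq3 unfolding q_def
    by (cases z; cases y) auto
  have UNIVset: "{w \<in> space M. Y w \<in> UNIV} = space M" by simp
  have cprob_sp: "cprob M (space M) (ev M A x \<inter> ev M C y) = 1" for x y
  proof -
    have "space M \<inter> (ev M A x \<inter> ev M C y) = ev M A x \<inter> ev M C y" unfolding ev_def by auto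
    moreover have "measure M (ev M A x \<inter> ev M C y) > 0" using mAC Ppos
      by (metis add_pos_pos)
    ultimately show ?thesis unfolding cprob_def by simp
  qed
  have cellinter: "ev M A x \<inter> ev M C y \<inter> ev M D z \<inter> space M = ev M A x \<inter> ev M C y \<inter> ev M D z" for x y z
    unfolding ev_def by auto
  have Pf: "P x y z = measure M (ev M C y) * cprob M (ev M D z) (ev M C y) * cprob M (ev M A x) (ev M C y)" for x y z
    using factor[of UNIV x y z] unfolding UNIVset cprob_sp cellinter P_def by simp
  have Pv: "P x y z = 1/2 * (if z = y then q else 1 - q) * (if x = y then q else 1 - q)" for x y z
    using Pf[of x y z] cA cD pcy by simp
  have Jv: "J x y z = P x y z * mu x y" for x y z
  proof -
    define m where "m = measure M (ev M A x \<inter> ev M C y)"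
    have m: "m > 0" unfolding m_def using mAC Ppos by (metis add_pos_pos)
    have "J x y z = P x y z / m * (\<integral>w. indicator (ev M A x \<inter> ev M C y) w * Y w \<partial>M)"
      unfolding J_def
    proof (rule key_integral[OF pm])
      show "ev M A x \<inter> ev M C y \<inter> ev M D z \<in> sets M" using sA sC sD by auto
      show "ev M A x \<inter> ev M C y \<in> sets M" using sA sC by auto
      show "Y \<in> borel_measurable M" by fact
      show "0 \<le> P x y z / m" using m Ppos[of x y z] by simp
      fix B :: "real set" assume B: "B \<in> sets borel"
      have "measure M (ev M A x \<inter> ev M C y \<inter> ev M D z \<inter> {w \<in> space M. Y w \<in> B})
          = P x y z * cprob M {w \<in> space M. Y w \<in> B} (ev M A x \<inter> ev M C y)"
        using factor[OF B, of x y z] Pf[of x y z] by simp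
      also have "\<dots> = P x y z / m * measure M ({w \<in> space M. Y w \<in> B} \<inter> (ev M A x \<inter> ev M C y))"
        unfolding cprob_def m_def by simp
      finally show "measure M (ev M A x \<inter> ev M C y \<inter> ev M D z \<inter> {w \<in> space M. Y w \<in> B})
          = P x y z / m * measure M ({w \<in> space M. Y w \<in> B} \<inter> (ev M A x \<inter> ev M C y))" .
    qed
    then show ?thesis unfolding mu_def cexp_def m_def by simp
  qed
  have mDz: "measure M (ev M D z) = 1/2" for z
  proof -
    have "measure M (ev M D z) = measure M (ev M D z \<inter> ev M C True) + measure M (ev M D z \<inter> ev M C False)"
      by (rule split_measure[OF pm mC sD])
    also have "\<dots> = measure M (ev M C True) * cprob M (ev M D z) (ev M C True)
                  + measure M (ev M C False) * cprob M (ev M D z) (ev M C False)"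
      unfolding cprob_def using pc pcF by (simp add: Int_commute)
    finally show ?thesis using pc pcF cD by (cases z) (auto simp: field_simps)
  qed
  have qh: "q \<ge> 1/2" using ge unfolding q_def .
  have q1: "q < 1"
  proof -
    have "0 < q * (1 - q)" using Ppos[of False True True] Pv[of False True True] by (auto split: if_splits)
    then show ?thesis using qh by (auto simp: zero_less_mult_iff)
  qed
  have q0: "q > 0" using qh by linarith
  have muAC: "cexp M Y (ev M A x \<inter> ev M C y) = mu x y" for x y unfolding mu_def ..
  have cAD: "cexp M Y (ev M A x \<inter> ev M D z) = (J x True z + J x False z) / (P x True z + P x False z)" for x z
    unfolding cexp_def JAD mAD ..
  have cAx: "cexp M Y (ev M A x) = (J x True True + J x True False + J x False True + J x False False)
       / (P x True True + P x True False + P x False True + P x False False)" for x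
    unfolding cexp_def JA mA1 ..
  have s0: "q*q+(1-q)*(1-q) \<noteq> 0" using q0 by (smt (verit) mult_pos_pos zero_le_square)
  have E1: "cexp M Y (ev M A True \<inter> ev M D True) = (q*q*mu True True + (1-q)*(1-q)*mu True False)/(q*q+(1-q)*(1-q))"
    unfolding cAD Jv Pv using s0 by (simp add: field_simps)
  have E2: "cexp M Y (ev M A False \<inter> ev M D False) = ((1-q)*(1-q)*mu False True + q*q*mu False False)/(q*q+(1-q)*(1-q))"
    unfolding cAD Jv Pv using s0 by (simp add: field_simps)
  have E3: "cexp M Y (ev M A True \<inter> ev M D False) = (mu True True + mu True False)/2"
    unfolding cAD Jv Pv using q0 q1 by (simp add: field_simps)
  have E4: "cexp M Y (ev M A False \<inter> ev M D True) = (mu False True + mu False False)/2"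
    unfolding cAD Jv Pv using q0 q1 by (simp add: field_simps)
  have E5: "cexp M Y (ev M A True) = q*mu True True + (1-q)*mu True False"
    unfolding cAx Jv Pv by (simp add: field_simps)
  have E6: "cexp M Y (ev M A False) = (1-q)*mu False True + q*mu False False"
    unfolding cAx Jv Pv by (simp add: field_simps)
  have main: "(q*mu True True + (1-q)*mu True False) - ((1-q)*mu False True + q*mu False False) \<ge>
     (q*q*mu True True + (1-q)*(1-q)*mu True False)/(q*q+(1-q)*(1-q)) * (1/2) + (mu True True+mu True False)/2 * (1/2)
   - (mu False True+mu False False)/2 * (1/2) - ((1-q)*(1-q)*mu False True + q*q*mu False False)/(q*q+(1-q)*(1-q)) * (1/2)
   \<and> (q*q*mu True True + (1-q)*(1-q)*mu True False)/(q*q+(1-q)*(1-q)) * (1/2) + (mu True True+mu True False)/2 * (1/2)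
   - (mu False True+mu False False)/2 * (1/2) - ((1-q)*(1-q)*mu False True + q*q*mu False False)/(q*q+(1-q)*(1-q)) * (1/2)
   \<ge> mu True True * (1/2) + mu True False * (1/2) - mu False True * (1/2) - mu False False*(1/2)"
    by (rule alg[OF qh q1]) (use h1 h2 in \<open>simp_all add: mu_def\<close>)
  show ?thesis
    unfolding RD_crude_def RD_obs_def RD_true_def E1 E2 E3 E4 E5 E6 muAC mDz pc pcF
    using main by simp
qed

end
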